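(* Let $K\subset\mathbb{R}^{n+m}$ be a convex body and fix $u\in W$. The following are equivalent: (1) $\Sigma_\pi K$ is strictly convex in direction $u$; (2) for almost every $x\in\pi(K)$ the fiber $K_x$ is strictly convex in direction $u$.
   Context: A convex body is a non-empty compact convex subset of a real vector space; its support function is $h_L(u)=\max\{\langle u,x\rangle : x\in L\}$, and its face in direction $u$ is $L^u:=\{y\in L:\langle u,y\rangle=h_L(u)\}$. $L$ is strictly convex in direction $u$ if $L^u$ consists of a single point. Let $V\subset\mathbb{R}^{n+m}$ be a linear subspace of dimension $n$, $W=V^\perp$, $\pi:\mathbb{R}^{n+m}\to V$ the orthogonal projection. For $x\in\pi(K)$ let $K_x:=\{y\in W : x+y\in K\}$. A section is a map $\gamma:\pi(K)\to W$ with $\gamma(x)\in K_x$ for all $x$; measurable means Borel measurable. The fiber body is $\Sigma_\pi K:=\{\int_{\pi(K)}\gamma(x)\,\mathrm{d}x : \gamma \text{ measurable section}\}\subset W$, with $\mathrm{d}x$ Lebesgue measure on $V$; "almost every" refers to Lebesgue measure on $V$. *)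

theory Defs
  imports "HOL-Analysis.Analysis"
begin

text \<open>Ambient space R^(n+m) is modelled as the product 'v \<times> 'w of two Euclidean
spaces, with V = 'v \<times> {0} (dimension n = DIM('v)) and W = V^\<bottom> = {0} \<times> 'w.
The orthogonal projection onto V is fst, and W is identified with 'w.\<close>

definition convex_body :: "'a::euclidean_space set \<Rightarrow> bool" where
  "convex_body L \<longleftrightarrow> L \<noteq> {} \<and> compact L \<and> convex L"

definition support_fun :: "'a::euclidean_space set \<Rightarrow> 'a \<Rightarrow> real" where
  "support_fun L u = (SUP x\<in>L. u \<bullet> x)"

definition face :: "'a::euclidean_space set \<Rightarrow> 'a \<Rightarrow> 'a set" where
  "face L u = {y \<in> L. u \<bullet> y = support_fun L u}"

definition strictly_convex_in_direction :: "'a::euclidean_space set \<Rightarrow> 'a \<Rightarrow> bool" where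
  "strictly_convex_in_direction L u \<longleftrightarrow> (\<exists>y. face L u = {y})"

definition fiber :: "('v::euclidean_space \<times> 'w::euclidean_space) set \<Rightarrow> 'v \<Rightarrow> 'w set" where
  "fiber K x = {y. (x, y) \<in> K}"

definition measurable_section ::
  "('v::euclidean_space \<times> 'w::euclidean_space) set \<Rightarrow> ('v \<Rightarrow> 'w) \<Rightarrow> bool" where
  "measurable_section K \<gamma> \<longleftrightarrow>
     \<gamma> \<in> borel_measurable (restrict_space borel (fst ` K)) \<and>
     (\<forall>x\<in>fst ` K. \<gamma> x \<in> fiber K x)"

definition fiber_body :: "('v::euclidean_space \<times> 'w::euclidean_space) set \<Rightarrow> 'w set" where
  "fiber_body K = {(LINT x:(fst ` K)|lborel. \<gamma> x) | \<gamma>. measurable_section K \<gamma>}"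

end

theory Submission imports Defs begin

definition mle :: "('v::euclidean_space \<times> 'w::euclidean_space) set \<Rightarrow> bool" where
  "mle G \<longleftrightarrow> (\<forall>C. compact C \<longrightarrow> {x. fiber G x \<inter> C \<noteq> {}} \<in> sets borel)"

definition cfib :: "('v::euclidean_space \<times> 'w::euclidean_space) set \<Rightarrow> bool" where
  "cfib G \<longleftrightarrow> (\<forall>x. compact (fiber G x))"

definition mval :: "'w \<Rightarrow> ('v::euclidean_space \<times> 'w::euclidean_space) set \<Rightarrow> 'v \<Rightarrow> real" where
  "mval e G x = (if fiber G x = {} then 0 else Inf ((\<lambda>y. e \<bullet> y) ` fiber G x))"

definition stepG :: "'w \<Rightarrow> ('v::euclidean_space \<times> 'w::euclidean_space) set \<Rightarrow> ('v \<times> 'w) set" where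
  "stepG e G = {p\<in>G. e \<bullet> snd p = mval e G (fst p)}"

lemma mval_lower:
  assumes "cfib G" "y \<in> fiber G x"
  shows "mval e G x \<le> e \<bullet> y"
proof -
  have "compact ((\<lambda>y. e \<bullet> y) ` fiber G x)"
    using assms by (auto simp: cfib_def intro!: compact_continuous_image continuous_intros)
  then have "bdd_below ((\<lambda>y. e \<bullet> y) ` fiber G x)"
    by (simp add: bounded_imp_bdd_below compact_imp_bounded)
  then show ?thesis using assms by (auto simp: mval_def intro!: cInf_lower)
qed

lemma mval_attained:
  assumes "cfib G" "fiber G x \<noteq> {}"
  shows "\<exists>y\<in>fiber G x. e \<bullet> y = mval e G x"
proof -
  have "continuous_on (fiber G x) (\<lambda>y. e \<bullet> y)" by (intro continuous_intros)
  then obtain y where y: "y \<in> fiber G x" "\<And>z. z \<in> fiber G x \<Longrightarrow> e \<bullet> y \<le> e \<bullet> z"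
    using continuous_attains_inf[of "fiber G x" "\<lambda>y. e \<bullet> y"] assms
    by (auto simp: cfib_def)
  then have "Inf ((\<lambda>y. e \<bullet> y) ` fiber G x) = e \<bullet> y"
    by (intro cInf_eq_minimum) auto
  then show ?thesis using y assms by (auto simp: mval_def)
qed

lemma mval_le_iff:
  assumes "cfib G" "fiber G x \<noteq> {}"
  shows "mval e G x \<le> c \<longleftrightarrow> fiber G x \<inter> {y. e \<bullet> y \<le> c} \<noteq> {}"
proof
  assume "mval e G x \<le> c"
  then show "fiber G x \<inter> {y. e \<bullet> y \<le> c} \<noteq> {}"
    using mval_attained[OF assms, of e] by force
next
  assume "fiber G x \<inter> {y. e \<bullet> y \<le> c} \<noteq> {}"
  then obtain y where "y \<in> fiber G x" "e \<bullet> y \<le> c" by blast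
  then show "mval e G x \<le> c" using mval_lower[OF assms(1), of y x e] by linarith
qed

lemma fiber_Int: "fiber (G \<inter> UNIV \<times> C) x = fiber G x \<inter> C"
  by (auto simp: fiber_def)

lemma cfib_Int: "cfib G \<Longrightarrow> compact C \<Longrightarrow> cfib (G \<inter> UNIV \<times> C)"
  unfolding cfib_def fiber_Int by (blast intro: compact_Int)

lemma mle_Int: "mle G \<Longrightarrow> compact C \<Longrightarrow> mle (G \<inter> UNIV \<times> C)"
  unfolding mle_def fiber_Int
proof (intro allI impI)
  fix D :: "'b set"
  assume h: "\<forall>C. compact C \<longrightarrow> {x. fiber G x \<inter> C \<noteq> {}} \<in> sets borel" and C: "compact C" and D: "compact D"
  have "compact (C \<inter> D)" using C D by (rule compact_Int)
  then have "{x. fiber G x \<inter> (C \<inter> D) \<noteq> {}} \<in> sets borel" using h by blast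
  then show "{x. fiber G x \<inter> C \<inter> D \<noteq> {}} \<in> sets borel" by (simp add: Int_assoc)
qed

lemma mle_UN:
  assumes "mle G" "closed C"
  shows "{x. fiber G x \<inter> C \<noteq> {}} \<in> sets borel"
proof -
  have "{x. fiber G x \<inter> C \<noteq> {}} = (\<Union>n::nat. {x. fiber G x \<inter> (C \<inter> cball 0 (real n)) \<noteq> {}})"
  proof (intro equalityI subsetI)
    fix x assume "x \<in> {x. fiber G x \<inter> C \<noteq> {}}"
    then obtain y where y: "y \<in> fiber G x" "y \<in> C" by blast
    obtain n :: nat where "norm y \<le> real n" using real_arch_simple by blast
    then have "y \<in> cball 0 (real n)" by (simp add: mem_cball_0)
    with y have "fiber G x \<inter> (C \<inter> cball 0 (real n)) \<noteq> {}" by blast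
    then show "x \<in> (\<Union>n::nat. {x. fiber G x \<inter> (C \<inter> cball 0 (real n)) \<noteq> {}})" by blast
  qed blast
  also have "\<dots> \<in> sets borel"
    using assms unfolding mle_def
    by (intro sets.countable_nat_UN) (auto simp: closed_Int_compact)
  finally show ?thesis .
qed

lemma mval_meas:
  assumes "mle G" "cfib G"
  shows "mval e G \<in> borel_measurable borel"
proof (rule borel_measurableI_le)
  fix c
  have "{x \<in> space borel. mval e G x \<le> c} =
     {x. fiber G x \<inter> {y. e \<bullet> y \<le> c} \<noteq> {}} \<union> (if 0 \<le> c then - {x. fiber G x \<inter> UNIV \<noteq> {}} else {})"
    using mval_le_iff[OF assms(2)] by (auto simp: mval_def)
  also have "\<dots> \<in> sets borel"
    using mle_UN[OF assms(1), of UNIV] mle_UN[OF assms(1), of "{y. e \<bullet> y \<le> c}"]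
    by (auto intro!: closed_halfspace_le sets.Un sets.compl_sets)
  finally show "{x \<in> space borel. mval e G x \<le> c} \<in> sets borel" .
qed

lemma fiber_step: "fiber (stepG e G) x = {y \<in> fiber G x. e \<bullet> y = mval e G x}"
  by (auto simp: fiber_def stepG_def)

lemma cfib_step: "cfib G \<Longrightarrow> cfib (stepG e G)"
  unfolding cfib_def fiber_step
proof
  fix x assume "\<forall>x. compact (fiber G x)"
  moreover have "closed {y. e \<bullet> y = mval e G x}"
    by (intro closed_Collect_eq continuous_intros)
  ultimately have "compact (fiber G x \<inter> {y. e \<bullet> y = mval e G x})"
    by (intro compact_Int_closed) auto
  then show "compact {y \<in> fiber G x. e \<bullet> y = mval e G x}"
    by (simp add: Collect_conj_eq)
qed

lemma mle_step:
  assumes "mle G" "cfib G"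
  shows "mle (stepG e G)"
  unfolding mle_def
proof (intro allI impI)
  fix C :: "'b set" assume C: "compact C"
  let ?G = "G \<inter> UNIV \<times> C"
  have cG: "cfib ?G" using cfib_Int[OF assms(2) C] .
  have "{x. fiber (stepG e G) x \<inter> C \<noteq> {}} =
        {x. fiber G x \<inter> C \<noteq> {}} \<inter> {x \<in> space borel. mval e ?G x \<le> mval e G x}"
  proof (auto simp: fiber_step, goal_cases)
    case (1 x y)
    then show ?case using mval_lower[OF cG, of y x e] by (auto simp: fiber_Int)
  next
    case (2 x y)
    then have ne: "fiber ?G x \<noteq> {}" by (auto simp: fiber_Int)
    obtain z where z: "z \<in> fiber ?G x" "e \<bullet> z = mval e ?G x"
      using mval_attained[OF cG ne] by blast
    then have "z \<in> fiber G x" "z \<in> C" by (auto simp: fiber_Int)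
    with mval_lower[OF assms(2) this(1), of e] z 2 have "e \<bullet> z = mval e G x" by auto
    then show ?case using \<open>z \<in> fiber G x\<close> \<open>z \<in> C\<close> 2 by blast
  qed
  also have "\<dots> \<in> sets borel"
    using assms C mle_Int[OF assms(1) C] cG
    by (intro sets.Int borel_measurable_le mval_meas) (auto simp: mle_def)
  finally show "{x. fiber (stepG e G) x \<inter> C \<noteq> {}} \<in> sets borel" .
qed

lemma fst_step: "cfib G \<Longrightarrow> fst ` stepG e G = fst ` G"
proof (auto simp: stepG_def, goal_cases)
  case (1 x y)
  then have "fiber G x \<noteq> {}" by (auto simp: fiber_def)
  from mval_attained[OF 1(1) this] obtain z where "z \<in> fiber G x" "e \<bullet> z = mval e G x" by blast
  then show ?case by (force simp: fiber_def)
qed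

fun refine :: "'w list \<Rightarrow> ('v::euclidean_space \<times> 'w::euclidean_space) set \<Rightarrow> ('v \<times> 'w) set" where
  "refine [] G = G"
| "refine (e # es) G = refine es (stepG e G)"

lemma refine_props:
  assumes "mle G" "cfib G"
  shows "mle (refine es G) \<and> cfib (refine es G) \<and> refine es G \<subseteq> G \<and> fst ` refine es G = fst ` G \<and>
     (\<forall>e\<in>set es. \<exists>f\<in>borel_measurable borel. \<forall>p\<in>refine es G. e \<bullet> snd p = f (fst p))"
  using assms
proof (induction es arbitrary: G)
  case Nil
  then show ?case by auto
next
  case (Cons e es)
  have m: "mle (stepG e G)" "cfib (stepG e G)"
    using Cons.prems mle_step cfib_step by auto
  note IH = Cons.IH[OF m]
  have sub: "stepG e G \<subseteq> G" by (auto simp: stepG_def)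
  have "\<forall>p\<in>refine es (stepG e G). e \<bullet> snd p = mval e G (fst p)"
    using IH sub by (auto simp: stepG_def)
  then have "\<exists>f\<in>borel_measurable borel. \<forall>p\<in>refine es (stepG e G). e \<bullet> snd p = f (fst p)"
    using mval_meas[OF Cons.prems] by blast
  then show ?case using IH sub fst_step[OF Cons.prems(2)] by auto
qed

lemma selection:
  fixes G :: "('v::euclidean_space \<times> 'w::euclidean_space) set"
  assumes "mle G" "cfib G"
  shows "\<exists>\<gamma>\<in>borel_measurable borel. \<forall>x\<in>fst ` G. (x, \<gamma> x) \<in> G"
proof -
  obtain es :: "'w list" where es: "set es = Basis" using finite_list[OF finite_Basis] by blast
  let ?R = "refine es G"
  from refine_props[OF assms, of es] es have R: "?R \<subseteq> G" "fst ` ?R = fst ` G"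
    and "\<forall>b\<in>Basis. \<exists>f\<in>borel_measurable borel. \<forall>p\<in>?R. b \<bullet> snd p = f (fst p)" by auto
  then obtain f where f0: "\<forall>b\<in>Basis. f b \<in> borel_measurable borel \<and> (\<forall>p\<in>?R. b \<bullet> snd p = f b (fst p))"
    using bchoice[of Basis "\<lambda>b f. f \<in> borel_measurable borel \<and> (\<forall>p\<in>?R. b \<bullet> snd p = f (fst p))"] by blast
  then have f: "\<And>b. b \<in> Basis \<Longrightarrow> f b \<in> borel_measurable borel"
    "\<And>b p. b \<in> Basis \<Longrightarrow> p \<in> ?R \<Longrightarrow> b \<bullet> snd p = f b (fst p)" by auto
  define \<gamma> where "\<gamma> x = (\<Sum>b\<in>Basis. f b x *\<^sub>R b)" for x
  have "\<gamma> \<in> borel_measurable borel" unfolding \<gamma>_def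
    by (intro borel_measurable_sum borel_measurable_scaleR f(1) borel_measurable_const)
  moreover have "(x, \<gamma> x) \<in> G" if "x \<in> fst ` G" for x
  proof -
    have "x \<in> fst ` ?R" using that R(2) by simp
    then obtain y where y: "(x, y) \<in> ?R" by auto
    have "y = (\<Sum>b\<in>Basis. (y \<bullet> b) *\<^sub>R b)" by (rule euclidean_representation[symmetric])
    also have "\<dots> = \<gamma> x" unfolding \<gamma>_def using f(2)[OF _ y]
      by (intro sum.cong) (auto simp: inner_commute)
    finally have "(x, \<gamma> x) \<in> ?R" using y by simp
    then show ?thesis using R(1) by blast
  qed
  ultimately show ?thesis by blast
qed


lemma K_mle: "compact K \<Longrightarrow> mle K"
  unfolding mle_def
proof (intro allI impI)
  fix C :: "'b set" assume K: "compact K" and C: "compact C"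
  have "{x. fiber K x \<inter> C \<noteq> {}} = fst ` (K \<inter> UNIV \<times> C)"
    by (auto simp: fiber_def image_iff) force
  moreover have "compact (fst ` (K \<inter> UNIV \<times> C))"
    using K C by (intro compact_continuous_image continuous_intros compact_Int_closed closed_Times)
       (auto simp: compact_imp_closed)
  ultimately show "{x. fiber K x \<inter> C \<noteq> {}} \<in> sets borel"
    by (simp add: borel_compact)
qed

lemma K_cfib: "compact K \<Longrightarrow> cfib K"
  unfolding cfib_def
proof
  fix x assume K: "compact K"
  have "fiber K x = snd ` (K \<inter> {x} \<times> UNIV)" by (force simp: fiber_def)
  moreover have "compact (snd ` (K \<inter> {x} \<times> UNIV))"
    using K by (intro compact_continuous_image continuous_intros compact_Int_closed closed_Times) auto
  ultimately show "compact (fiber K x)" by simp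
qed

lemma sec_int:
  fixes K :: "('v::euclidean_space \<times> 'w::euclidean_space) set"
  assumes K: "compact K" and s: "measurable_section K \<gamma>"
  shows "integrable lborel (\<lambda>x. indicator (fst ` K) x *\<^sub>R \<gamma> x)"
proof -
  have cP: "compact (fst ` K)" using K by (intro compact_continuous_image continuous_intros)
  then have PB: "fst ` K \<in> sets borel" by (simp add: borel_compact)
  have fin: "emeasure lborel (fst ` K) < \<infinity>" using emeasure_bounded_finite[OF compact_imp_bounded[OF cP]] .
  obtain B where B: "\<And>p. p \<in> K \<Longrightarrow> norm p \<le> B"
    using compact_imp_bounded[OF K] by (auto simp: bounded_iff)
  have meas: "(\<lambda>x. indicator (fst ` K) x *\<^sub>R \<gamma> x) \<in> borel_measurable borel"
    using s PB by (simp add: measurable_section_def borel_measurable_restrict_space_iff)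
  have i1: "integrable lborel (\<lambda>x. indicator (fst ` K) x * B)"
    using PB fin by (intro integrable_mult_left) auto
  have m1: "(\<lambda>x. indicator (fst ` K) x *\<^sub>R \<gamma> x) \<in> borel_measurable lborel" using meas by simp
  have ae: "AE x in lborel. norm (indicator (fst ` K) x *\<^sub>R \<gamma> x) \<le> norm (indicator (fst ` K) x * B)"
  proof (intro AE_I2)
    fix x
    show "norm (indicator (fst ` K) x *\<^sub>R \<gamma> x) \<le> norm (indicator (fst ` K) x * B)"
    proof (cases "x \<in> fst ` K")
      case True
      then have "(x, \<gamma> x) \<in> K" using s by (auto simp: measurable_section_def fiber_def)
      then have "norm (\<gamma> x) \<le> B" using B[of "(x, \<gamma> x)"] norm_snd_le[of "\<gamma> x" x] by linarith
      then show ?thesis using True by auto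
    qed auto
  qed
  show ?thesis by (rule Bochner_Integration.integrable_bound[OF i1 m1 ae])
qed

lemma inner_I:
  fixes K :: "('v::euclidean_space \<times> 'w::euclidean_space) set"
  assumes K: "compact K" and s: "measurable_section K \<gamma>"
  shows "c \<bullet> (LINT x:(fst ` K)|lborel. \<gamma> x) = integral\<^sup>L lborel (\<lambda>x. indicator (fst ` K) x * (c \<bullet> \<gamma> x))"
    and "integrable lborel (\<lambda>x. indicator (fst ` K) x * (c \<bullet> \<gamma> x))"
proof -
  have e: "(\<lambda>x. indicator (fst ` K) x * (c \<bullet> \<gamma> x)) = (\<lambda>x. c \<bullet> (indicator (fst ` K) x *\<^sub>R \<gamma> x))"
    by auto
  show "c \<bullet> (LINT x:(fst ` K)|lborel. \<gamma> x) = integral\<^sup>L lborel (\<lambda>x. indicator (fst ` K) x * (c \<bullet> \<gamma> x))"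
    using integral_inner_right[of c lborel "\<lambda>x. indicator (fst ` K) x *\<^sub>R \<gamma> x"] sec_int[OF K s]
    by (simp add: set_lebesgue_integral_def)
  show "integrable lborel (\<lambda>x. indicator (fst ` K) x * (c \<bullet> \<gamma> x))"
    using integrable_inner_right[of c lborel "\<lambda>x. indicator (fst ` K) x *\<^sub>R \<gamma> x"] sec_int[OF K s]
    by simp
qed

lemma diff_zero_AE:
  fixes K :: "('v::euclidean_space \<times> 'w::euclidean_space) set"
  assumes K: "compact K" and s1: "measurable_section K \<gamma>1" and s2: "measurable_section K \<gamma>2"
    and le: "\<And>x. x \<in> fst ` K \<Longrightarrow> c \<bullet> \<gamma>2 x \<le> c \<bullet> \<gamma>1 x"
    and eq: "c \<bullet> (LINT x:(fst ` K)|lborel. \<gamma>1 x) = c \<bullet> (LINT x:(fst ` K)|lborel. \<gamma>2 x)"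
  shows "AE x in lborel. x \<in> fst ` K \<longrightarrow> c \<bullet> \<gamma>1 x = c \<bullet> \<gamma>2 x"
proof -
  let ?f = "\<lambda>x. indicator (fst ` K) x * (c \<bullet> \<gamma>1 x) - indicator (fst ` K) x * (c \<bullet> \<gamma>2 x)"
  have i: "integrable lborel ?f" using inner_I(2)[OF K s1] inner_I(2)[OF K s2] by auto
  have "integral\<^sup>L lborel ?f = 0"
    using inner_I(2)[OF K s1] inner_I(2)[OF K s2] inner_I(1)[OF K s1] inner_I(1)[OF K s2] eq
    by simp
  moreover have "AE x in lborel. 0 \<le> ?f x"
    by (intro AE_I2) (auto simp: indicator_def le)
  ultimately have "AE x in lborel. ?f x = 0" using integral_nonneg_eq_0_iff_AE[OF i] by simp
  then show ?thesis by (rule eventually_mono) (auto simp: indicator_def)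
qed

lemma sec_of_borel:
  "\<gamma> \<in> borel_measurable borel \<Longrightarrow> (\<And>x. x \<in> fst ` K \<Longrightarrow> (x, \<gamma> x) \<in> K) \<Longrightarrow> measurable_section K \<gamma>"
  by (auto simp: measurable_section_def fiber_def intro: measurable_restrict_space1)

lemma support_max:
  assumes "y0 \<in> L" "\<And>z. z \<in> L \<Longrightarrow> u \<bullet> z \<le> u \<bullet> y0"
  shows "support_fun L u = u \<bullet> y0" "face L u = {y \<in> L. u \<bullet> y = u \<bullet> y0}"
proof -
  show "support_fun L u = u \<bullet> y0" unfolding support_fun_def
    using assms by (intro cSup_eq_maximum) auto
  then show "face L u = {y \<in> L. u \<bullet> y = u \<bullet> y0}" by (simp add: face_def)
qed

theorem mainTheorem7:
  fixes K :: "('v::euclidean_space \<times> 'w::euclidean_space) set" and u :: 'w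
  assumes "convex_body K"
  shows "strictly_convex_in_direction (fiber_body K) u \<longleftrightarrow>
         (AE x in lborel. x \<in> fst ` K \<longrightarrow> strictly_convex_in_direction (fiber K x) u)"
proof -
  have K: "compact K" using assms by (simp add: convex_body_def)
  let ?P = "fst ` K"
  let ?I = "\<lambda>\<gamma>. (LINT x:(fst ` K)|lborel. \<gamma> x)"
  have mK: "mle K" and cK: "cfib K" using K K_mle K_cfib by auto
  define G1 where "G1 = stepG (-u) K"
  have mG1: "mle G1" and cG1: "cfib G1" and fG1: "fst ` G1 = ?P"
    using mK cK by (auto simp: G1_def mle_step cfib_step fst_step)
  have G1K: "G1 \<subseteq> K" by (auto simp: G1_def stepG_def)
  have G1_max: "u \<bullet> z \<le> u \<bullet> y" if "(x, y) \<in> G1" "z \<in> fiber K x" for x y z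
    using that mval_lower[OF cK that(2), of "-u"] by (auto simp: G1_def stepG_def)
  obtain \<gamma>0 where g0m: "\<gamma>0 \<in> borel_measurable borel" and g0: "\<And>x. x \<in> ?P \<Longrightarrow> (x, \<gamma>0 x) \<in> G1"
    using selection[OF mG1 cG1] fG1 by auto
  have s0: "measurable_section K \<gamma>0" using g0 G1K by (intro sec_of_borel[OF g0m]) auto
  have g0K: "\<gamma>0 x \<in> fiber K x" if "x \<in> ?P" for x using g0[OF that] G1K by (auto simp: fiber_def)
  have g0max: "u \<bullet> z \<le> u \<bullet> \<gamma>0 x" if "x \<in> ?P" "z \<in> fiber K x" for x z
    using G1_max[OF g0[OF that(1)] that(2)] .
  have faceK: "face (fiber K x) u = {y \<in> fiber K x. u \<bullet> y = u \<bullet> \<gamma>0 x}" if "x \<in> ?P" for x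
    using support_max(2)[of "\<gamma>0 x" "fiber K x" u] g0K[OF that] g0max[OF that] by auto
  have inG1: "(x, y) \<in> G1" if "x \<in> ?P" "y \<in> fiber K x" "u \<bullet> y = u \<bullet> \<gamma>0 x" for x y
  proof -
    have "(-u) \<bullet> \<gamma>0 x = mval (-u) K x" using g0[OF that(1)] by (auto simp: G1_def stepG_def)
    then show ?thesis using that by (auto simp: G1_def stepG_def fiber_def)
  qed
  have fb_max: "u \<bullet> ?I \<gamma> \<le> u \<bullet> ?I \<gamma>0" if s: "measurable_section K \<gamma>" for \<gamma>
    unfolding inner_I(1)[OF K s] inner_I(1)[OF K s0]
    using s by (intro integral_mono inner_I(2)[OF K s] inner_I(2)[OF K s0])
      (auto simp: indicator_def measurable_section_def intro!: g0max)
  have I0: "?I \<gamma>0 \<in> fiber_body K" using s0 by (auto simp: fiber_body_def)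
  have face_fb: "face (fiber_body K) u = {z \<in> fiber_body K. u \<bullet> z = u \<bullet> ?I \<gamma>0}"
    using support_max(2)[OF I0, of u] fb_max by (auto simp: fiber_body_def)
  show ?thesis
  proof
    assume sc: "strictly_convex_in_direction (fiber_body K) u"
    then obtain z0 where z0: "face (fiber_body K) u = {z0}" by (auto simp: strictly_convex_in_direction_def)
    have "?I \<gamma>0 \<in> face (fiber_body K) u" using face_fb I0 by auto
    then have z0I: "z0 = ?I \<gamma>0" using z0 by auto
    have "\<exists>gp gm. gp \<in> borel_measurable borel \<and> gm \<in> borel_measurable borel \<and>
        (\<forall>x\<in>?P. (x, gp x) \<in> stepG (-b) G1) \<and> (\<forall>x\<in>?P. (x, gm x) \<in> stepG b G1)" for b
    proof -
      have "mle (stepG (-b) G1)" "cfib (stepG (-b) G1)" "mle (stepG b G1)" "cfib (stepG b G1)"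
        using mG1 cG1 by (auto simp: mle_step cfib_step)
      from selection[OF this(1,2)] selection[OF this(3,4)] fst_step[OF cG1] fG1
      show ?thesis by metis
    qed
    then obtain gp gm where gpm: "\<And>b. gp b \<in> borel_measurable borel" "\<And>b. gm b \<in> borel_measurable borel"
        and gp: "\<And>b x. x \<in> ?P \<Longrightarrow> (x, gp b x) \<in> stepG (-b) G1"
        and gm: "\<And>b x. x \<in> ?P \<Longrightarrow> (x, gm b x) \<in> stepG b G1" by metis
    have gpG1: "(x, gp b x) \<in> G1" "(x, gm b x) \<in> G1" if "x \<in> ?P" for b x
      using gp[OF that] gm[OF that] by (auto simp: stepG_def)
    have gp_ge: "b \<bullet> y \<le> b \<bullet> gp b x" if "x \<in> ?P" "y \<in> fiber G1 x" for b x y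
      using gp[OF that(1), of b] mval_lower[OF cG1 that(2), of "-b"] by (auto simp: stepG_def)
    have gm_le: "b \<bullet> gm b x \<le> b \<bullet> y" if "x \<in> ?P" "y \<in> fiber G1 x" for b x y
      using gm[OF that(1), of b] mval_lower[OF cG1 that(2), of "b"] by (auto simp: stepG_def)
    have G1eq: "u \<bullet> y = u \<bullet> \<gamma>0 x" if "x \<in> ?P" "(x, y) \<in> G1" for x y
      using G1_max[OF that(2), of "\<gamma>0 x"] G1_max[OF g0[OF that(1)], of y] that G1K g0K[OF that(1)]
      by (force simp: fiber_def)
    have inface: "?I g = ?I \<gamma>0" if g: "g \<in> borel_measurable borel" "\<And>x. x \<in> ?P \<Longrightarrow> (x, g x) \<in> G1" for g
    proof -
      have s: "measurable_section K g" using g G1K by (intro sec_of_borel) auto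
      have "u \<bullet> ?I g = u \<bullet> ?I \<gamma>0"
        unfolding inner_I(1)[OF K s] inner_I(1)[OF K s0]
        by (intro Bochner_Integration.integral_cong) (auto simp: indicator_def G1eq g)
      then have "?I g \<in> face (fiber_body K) u" using face_fb s by (auto simp: fiber_body_def)
      then show ?thesis using z0 z0I by auto
    qed
    have key: "AE x in lborel. x \<in> ?P \<longrightarrow> b \<bullet> gp b x = b \<bullet> gm b x" for b
    proof -
      have sp: "measurable_section K (gp b)" and sm: "measurable_section K (gm b)"
        by (intro sec_of_borel gpm; use gpG1 G1K in blast)+
      have "?I (gp b) = ?I (gm b)" using inface[of "gp b"] inface[of "gm b"] gpm gpG1 by auto
      moreover have "b \<bullet> gm b x \<le> b \<bullet> gp b x" if "x \<in> ?P" for x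
        using gm_le[OF that, of "gp b x" b] gpG1[OF that, of b] by (simp add: fiber_def)
      ultimately show ?thesis
        by (intro diff_zero_AE[OF K sp sm]) auto
    qed
    have "AE x in lborel. \<forall>b\<in>Basis. x \<in> ?P \<longrightarrow> b \<bullet> gp b x = b \<bullet> gm b x"
      using key by (intro eventually_ball_finite) auto
    then show "AE x in lborel. x \<in> fst ` K \<longrightarrow> strictly_convex_in_direction (fiber K x) u"
    proof eventually_elim
      case (elim x)
      show ?case
      proof
        assume xP: "x \<in> ?P"
        have "face (fiber K x) u = {\<gamma>0 x}"
        proof (intro equalityI subsetI)
          fix y assume "y \<in> face (fiber K x) u"
          then have yG: "y \<in> fiber G1 x" using faceK[OF xP] inG1[OF xP] by (auto simp: fiber_def)
          have g0G: "\<gamma>0 x \<in> fiber G1 x" using g0[OF xP] by (auto simp: fiber_def)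
          have "y = \<gamma>0 x"
          proof (rule euclidean_eqI)
            fix b :: 'w assume b: "b \<in> Basis"
            have "b \<bullet> y = b \<bullet> gp b x" using gp_ge[OF xP yG, of b] gm_le[OF xP yG, of b] elim b xP by auto
            moreover have "b \<bullet> \<gamma>0 x = b \<bullet> gp b x" using gp_ge[OF xP g0G, of b] gm_le[OF xP g0G, of b] elim b xP by auto
            ultimately show "y \<bullet> b = \<gamma>0 x \<bullet> b" by (simp add: inner_commute)
          qed
          then show "y \<in> {\<gamma>0 x}" by simp
        next
          fix y assume "y \<in> {\<gamma>0 x}"
          then show "y \<in> face (fiber K x) u" using faceK[OF xP] g0K[OF xP] by auto
        qed
        then show "strictly_convex_in_direction (fiber K x) u"
          by (auto simp: strictly_convex_in_direction_def)
      qed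
    qed
  next
    assume ae: "AE x in lborel. x \<in> fst ` K \<longrightarrow> strictly_convex_in_direction (fiber K x) u"
    have "face (fiber_body K) u = {?I \<gamma>0}"
    proof
      show "{?I \<gamma>0} \<subseteq> face (fiber_body K) u" using face_fb I0 by auto
    next
      show "face (fiber_body K) u \<subseteq> {?I \<gamma>0}"
      proof
        fix z assume "z \<in> face (fiber_body K) u"
        then obtain \<gamma> where s: "measurable_section K \<gamma>" and z: "z = ?I \<gamma>" and eq: "u \<bullet> ?I \<gamma> = u \<bullet> ?I \<gamma>0"
          using face_fb by (auto simp: fiber_body_def)
        have gK: "\<gamma> x \<in> fiber K x" if "x \<in> ?P" for x using s that by (auto simp: measurable_section_def)
        have "AE x in lborel. x \<in> ?P \<longrightarrow> u \<bullet> \<gamma>0 x = u \<bullet> \<gamma> x"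
          using diff_zero_AE[OF K s0 s, of u] eq g0max gK by auto
        then have "AE x in lborel. indicator ?P x *\<^sub>R \<gamma> x = indicator ?P x *\<^sub>R \<gamma>0 x"
          using ae
        proof eventually_elim
          case (elim x)
          show ?case
          proof (cases "x \<in> ?P")
            case True
            then obtain y where "face (fiber K x) u = {y}" using elim by (auto simp: strictly_convex_in_direction_def)
            moreover have "\<gamma> x \<in> face (fiber K x) u" "\<gamma>0 x \<in> face (fiber K x) u"
              using faceK[OF True] gK[OF True] g0K[OF True] elim True by auto
            ultimately show ?thesis by auto
          qed auto
        qed
        then have "?I \<gamma> = ?I \<gamma>0" unfolding set_lebesgue_integral_def
          using sec_int[OF K s] sec_int[OF K s0] by (intro integral_cong_AE) auto
        then show "z \<in> {?I \<gamma>0}" using z by auto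
      qed
    qed
    then show "strictly_convex_in_direction (fiber_body K) u"
      by (auto simp: strictly_convex_in_direction_def)
  qed
qed

end
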